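(* Let $Q$ be a non-negative (twice differentiable) function on $[0,\infty)$ satisfying $xQ''(x)+\beta Q'(x)\le0$, where $\beta\ge0$ is a constant. Then $Q$ is increasing if $0\le\beta<1$, decreasing if $\beta>1$, and constant if $\beta=1$. *)

theory Defs
  imports Complex_Main
begin

end

theory Submission
  imports Defs "HOL-Analysis.Analysis"
begin

theorem lemma19:
  fixes Q Q' Q'' :: "real \<Rightarrow> real" and \<beta> :: real
  assumes beta_nonneg: "\<beta> \<ge> 0"
    and Q_nonneg: "\<And>x. x \<ge> 0 \<Longrightarrow> Q x \<ge> 0"
    and Q_deriv: "\<And>x. x \<ge> 0 \<Longrightarrow> (Q has_real_derivative Q' x) (at x within {0..})"
    and Q'_deriv: "\<And>x. x \<ge> 0 \<Longrightarrow> (Q' has_real_derivative Q'' x) (at x within {0..})"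
    and ineq: "\<And>x. x \<ge> 0 \<Longrightarrow> x * Q'' x + \<beta> * Q' x \<le> 0"
  shows "(\<beta> < 1 \<longrightarrow> mono_on {0..} Q)
       \<and> (\<beta> > 1 \<longrightarrow> antimono_on {0..} Q)
       \<and> (\<beta> = 1 \<longrightarrow> (\<forall>x y. 0 \<le> x \<longrightarrow> 0 \<le> y \<longrightarrow> Q x = Q y))"
proof -
  have atw: "at x within {0..} = at x" if "x > 0" for x :: real
    using that by (intro at_within_interior) simp
  have dQ: "(Q has_real_derivative Q' x) (at x)" if "x > 0" for x
    using Q_deriv[of x] atw[OF that] that by simp
  have dQ': "(Q' has_real_derivative Q'' x) (at x)" if "x > 0" for x
    using Q'_deriv[of x] atw[OF that] that by simp
  have contQ: "continuous_on {0..} Q"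
    using Q_deriv by (auto simp: continuous_on_eq_continuous_within intro: DERIV_continuous)
  have contQ': "continuous_on {0..} Q'"
    using Q'_deriv by (auto simp: continuous_on_eq_continuous_within intro: DERIV_continuous)
  define g where "g x = x powr \<beta> * Q' x" for x
  have dg: "(g has_real_derivative (x powr (\<beta> - 1) * (x * Q'' x + \<beta> * Q' x))) (at x)"
    if "x > 0" for x
  proof -
    have "(g has_real_derivative (\<beta> * x powr (\<beta> - 1) * Q' x + x powr \<beta> * Q'' x)) (at x)"
      unfolding g_def using that dQ'[OF that]
      by (auto intro!: derivative_eq_intros)
    moreover have "\<beta> * x powr (\<beta> - 1) * Q' x + x powr \<beta> * Q'' x
        = x powr (\<beta> - 1) * (x * Q'' x + \<beta> * Q' x)"
    proof -
      have "x powr \<beta> = x powr (\<beta> - 1) * x" using that by (simp add: powr_diff)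
      then show ?thesis by (simp add: algebra_simps)
    qed
    ultimately show ?thesis by simp
  qed
  have gdec: "g y \<le> g x" if "0 < x" "x \<le> y" for x y
  proof (rule deriv_nonpos_imp_antimono[OF _ _ that(2)])
    fix z assume "z \<in> {x..y}"
    then have z: "z > 0" using that by auto
    show "(g has_real_derivative (z powr (\<beta> - 1) * (z * Q'' z + \<beta> * Q' z))) (at z)"
      using dg[OF z] .
    show "z powr (\<beta> - 1) * (z * Q'' z + \<beta> * Q' z) \<le> 0"
      using ineq[of z] z by (simp add: mult_nonneg_nonpos)
  qed
  have neg: "Q' a \<le> 0" if "\<beta> > 0" "a > 0" for a
  proof (rule ccontr)
    assume "\<not> Q' a \<le> 0"
    then have ga: "g a > 0" using \<open>a > 0\<close> by (simp add: g_def)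
    have lim: "(g \<longlongrightarrow> 0 * Q' 0) (at_right 0)"
    proof -
      have "((\<lambda>x. x powr \<beta>) \<longlongrightarrow> 0) (at_right 0)"
        using \<open>\<beta> > 0\<close>
        by (intro tendsto_zero_powrI tendsto_const) (auto simp: eventually_at_right_field intro!: exI[of _ 1] tendsto_ident_at)
      moreover have "(Q' \<longlongrightarrow> Q' 0) (at_right 0)"
      proof -
        have "continuous (at 0 within {0..}) Q'"
          using contQ' by (simp add: continuous_on_eq_continuous_within)
        then have "(Q' \<longlongrightarrow> Q' 0) (at 0 within {0..})"
          by (simp add: continuous_within)
        then show ?thesis
          by (rule tendsto_within_subset) auto
      qed
      ultimately show ?thesis unfolding g_def by (intro tendsto_mult)
    qed
    then have "eventually (\<lambda>x. g x < g a) (at_right 0)"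
      using ga by (intro order_tendstoD) auto
    moreover have "eventually (\<lambda>x. x < a) (at_right 0)"
      using \<open>a > 0\<close> unfolding eventually_at_right_field by (intro exI[of _ a]) auto
    moreover have "eventually (\<lambda>x. x > 0) (at_right (0::real))"
      by (simp add: eventually_at_right_less)
    ultimately have "eventually (\<lambda>x. False) (at_right (0::real))"
      proof eventually_elim
      case (elim x)
      then show False using gdec[of x a] by simp
    qed
    then show False by simp
  qed
  have pos: "Q' a \<ge> 0" if "\<beta> \<le> 1" "a > 0" for a
  proof (rule ccontr)
    assume "\<not> Q' a \<ge> 0"
    define c where "c = g a"
    have c: "c < 0" using \<open>\<not> Q' a \<ge> 0\<close> \<open>a > 0\<close> by (simp add: c_def g_def mult_pos_neg)
    define F where "F x = (if \<beta> < 1 then x powr (1 - \<beta>) / (1 - \<beta>) else ln x)" for x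
    have dF: "(F has_real_derivative x powr (- \<beta>)) (at x)" if "x > 0" for x
    proof (cases "\<beta> < 1")
      case True
      have "((\<lambda>x. x powr (1 - \<beta>) / (1 - \<beta>)) has_real_derivative
              ((1 - \<beta>) * x powr (1 - \<beta> - 1) / (1 - \<beta>))) (at x)"
        using that by (auto intro!: derivative_eq_intros)
      then show ?thesis using True unfolding F_def by simp
    next
      case False
      then have "\<beta> = 1" using \<open>\<beta> \<le> 1\<close> by simp
      have "(ln has_real_derivative inverse x) (at x)"
        using that by (rule DERIV_ln)
      then show ?thesis using False \<open>\<beta> = 1\<close> that unfolding F_def
        by (simp add: powr_minus divide_inverse)
    qed
    have Flim: "filterlim F at_top at_top"
    proof (cases "\<beta> < 1")
      case True
      have "filterlim (\<lambda>x::real. x powr (1 - \<beta>) / (1 - \<beta>)) at_top at_top"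
      proof -
        have "filterlim (\<lambda>x::real. (1-\<beta>) * ln x) at_top at_top"
          using True by (intro filterlim_tendsto_pos_mult_at_top[OF tendsto_const] ln_at_top) auto
        then have "filterlim (\<lambda>x::real. exp ((1-\<beta>) * ln x)) at_top at_top"
          by (rule filterlim_compose[OF exp_at_top])
        then have "filterlim (\<lambda>x::real. x powr (1-\<beta>)) at_top at_top"
          by (rule filterlim_cong[THEN iffD1, rotated 3]) (auto simp: powr_def eventually_at_top_dense intro!: exI[of _ 0])
        then have "filterlim (\<lambda>x::real. inverse (1-\<beta>) * x powr (1-\<beta>)) at_top at_top"
          using True by (intro filterlim_tendsto_pos_mult_at_top[OF tendsto_const]) auto
        then show ?thesis by (simp add: divide_inverse mult.commute)
      qed
      then show ?thesis unfolding F_def using True by simp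
    next
      case False
      then show ?thesis unfolding F_def using ln_at_top by simp
    qed
    have bound: "Q x \<le> Q a + c * (F x - F a)" if "x \<ge> a" for x
    proof -
      define h where "h x = Q x - c * F x" for x
      have "h x \<le> h a"
      proof (rule deriv_nonpos_imp_antimono[OF _ _ that])
        fix z assume "z \<in> {a..x}"
        then have z: "z > 0" "z \<ge> a" using \<open>a > 0\<close> by auto
        show "(h has_real_derivative (Q' z - c * z powr (- \<beta>))) (at z)"
          unfolding h_def using dQ[OF z(1)] dF[OF z(1)]
          by (auto intro!: derivative_eq_intros)
        have "z powr \<beta> * Q' z \<le> c" using gdec[OF \<open>a > 0\<close> z(2)] by (simp add: g_def c_def)
        then have "Q' z \<le> c / z powr \<beta>" using z by (simp add: field_simps)
        then show "Q' z - c * z powr (- \<beta>) \<le> 0"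
          using z by (simp add: powr_minus divide_inverse)
      qed
      then show ?thesis unfolding h_def by (simp add: algebra_simps)
    qed
    have "eventually (\<lambda>x. F x > F a - Q a / c) at_top"
      using Flim by (simp add: filterlim_at_top_dense)
    moreover have "eventually (\<lambda>x. x \<ge> a) at_top" by (rule eventually_ge_at_top)
    ultimately have "eventually (\<lambda>x. F x > F a - Q a / c \<and> x \<ge> a) at_top"
      by (rule eventually_conj)
    then obtain N where N: "\<And>x. x \<ge> N \<Longrightarrow> F x > F a - Q a / c \<and> x \<ge> a"
      unfolding eventually_at_top_linorder by blast
    obtain x where x: "F x > F a - Q a / c" "x \<ge> a" using N[of N] by blast
    have "c * (F x - F a) < - Q a"
    proof -
      have "F x - F a > - Q a / c" using x(1) by simp
      then have "c * (F x - F a) < c * (- Q a / c)" using c by (rule mult_strict_left_mono_neg)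
      then show ?thesis using c by simp
    qed
    then have "Q x < 0" using bound[OF x(2)] by simp
    moreover have "Q x \<ge> 0" using Q_nonneg[of x] x(2) \<open>a > 0\<close> by simp
    ultimately show False by simp
  qed
  have monoQ: "mono_on {0..} Q" if "\<beta> \<le> 1"
  proof (rule mono_onI)
    fix r s :: real assume "r \<in> {0..}" "s \<in> {0..}" "r \<le> s"
    show "Q r \<le> Q s"
    proof (rule DERIV_nonneg_imp_increasing_open[OF \<open>r \<le> s\<close>])
      fix x assume "r < x" "x < s"
      then have "x > 0" using \<open>r \<in> {0..}\<close> by auto
      then show "\<exists>y. DERIV Q x :> y \<and> y \<ge> 0" using dQ pos[OF that] by blast
    next
      show "continuous_on {r..s} Q"
        by (rule continuous_on_subset[OF contQ]) (use \<open>r \<in> {0..}\<close> in auto)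
    qed
  qed
  have antiQ: "antimono_on {0..} Q" if "\<beta> > 0"
  proof (rule monotone_onI)
    fix r s :: real assume "r \<in> {0..}" "s \<in> {0..}" "r \<le> s"
    show "Q r \<ge> Q s"
    proof (rule DERIV_nonpos_imp_decreasing_open[OF \<open>r \<le> s\<close>])
      fix x assume "r < x" "x < s"
      then have "x > 0" using \<open>r \<in> {0..}\<close> by auto
      then show "\<exists>y. DERIV Q x :> y \<and> y \<le> 0" using dQ neg[OF that] by blast
    next
      show "continuous_on {r..s} Q"
        by (rule continuous_on_subset[OF contQ]) (use \<open>r \<in> {0..}\<close> in auto)
    qed
  qed
  have eqQ: "Q x = Q y" if "\<beta> = 1" "0 \<le> x" "0 \<le> y" for x y
  proof -
    have m: "mono_on {0..} Q" and am: "antimono_on {0..} Q" using monoQ antiQ that by auto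
    show ?thesis
    proof (cases "x \<le> y")
      case True
      then show ?thesis using m am that by (meson atLeast_iff antisym mono_onD monotone_onD)
    next
      case False
      then show ?thesis using m am that
        by (meson atLeast_iff antisym mono_onD monotone_onD nle_le)
    qed
  qed
  have A: "\<beta> < 1 \<longrightarrow> mono_on {0..} Q" using monoQ by simp
  have B: "\<beta> > 1 \<longrightarrow> antimono_on {0..} Q" using antiQ by simp
  have C: "\<beta> = 1 \<longrightarrow> (\<forall>x y. 0 \<le> x \<longrightarrow> 0 \<le> y \<longrightarrow> Q x = Q y)" using eqQ by blast
  show ?thesis using A B C by blast
qed

end
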